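(* Let $G=(V,E)$ be a finite graph with special vertex $i$, symmetric edge weights $w_E$ (with $w_E(u,v)=0$ for $uv\notin E$) and vertex weights $w_V$ (nonnegative, not identically zero). If $G$ and $G-i$ are each positively connected, then the largest eigenvalue of $L_i^{-1}W_{V,i}$ is simple. Equivalently, up to multiplication by $-1$, the solution of $$\min_{\|g\|_w=1,\ g(i)=0}\ \sum_{jk\in E} w_E(j,k)\,(g(k)-g(j))^2$$ is unique.
   Context: $\|g\|_w=\sqrt{\sum_{u\in V}w_V(u)g(u)^2}$; each edge is counted once. $L=D-W_E$ is the weighted Laplacian, with $W_E=(w_E(u,v))$ and $D$ diagonal with $d(k)=\sum_j w_E(k,j)$; $L_i$ is $L$ with row and column $i$ deleted (invertible under the hypotheses); $W_{V,i}$ is the diagonal matrix of vertex weights with row and column $i$ deleted. A weighted graph is positively connected if any two vertices are joined by a path of positive-weight edges; $G-i$ is $G$ with $i$ deleted. *)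

theory Defs
  imports "HOL-Analysis.Analysis" "HOL-Computational_Algebra.Polynomial"
begin

text \<open>Vertex set of G is the finite type 'm option; the special vertex i is None,
  so the vertex set of G - i is (a copy of) the type 'm.
  Edge weights: wE :: 'm option => 'm option => real (zero on non-edges).\<close>

definition pos_connected :: "'v set \<Rightarrow> ('v \<Rightarrow> 'v \<Rightarrow> real) \<Rightarrow> bool" where
  "pos_connected S w \<longleftrightarrow>
     (\<forall>u\<in>S. \<forall>v\<in>S. (\<lambda>x y. x \<in> S \<and> y \<in> S \<and> w x y > 0)\<^sup>*\<^sup>* u v)"

definition laplacian :: "('v::finite \<Rightarrow> 'v \<Rightarrow> real) \<Rightarrow> 'v \<Rightarrow> 'v \<Rightarrow> real" where
  "laplacian w j k = (if j = k then (\<Sum>l\<in>UNIV. w j l) else 0) - w j k"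

definition lap_del :: "('m::finite option \<Rightarrow> 'm option \<Rightarrow> real) \<Rightarrow> real^'m^'m" where
  "lap_del w = (\<chi> j k. laplacian w (Some j) (Some k))"

definition wv_del :: "('m::finite option \<Rightarrow> real) \<Rightarrow> real^'m^'m" where
  "wv_del wV = (\<chi> j k. if j = k then wV (Some j) else 0)"

definition charpoly :: "real^'m^'m \<Rightarrow> real poly" where
  "charpoly A = det (\<chi> j k. (if j = k then [:0, 1:] else 0) - [:A $ j $ k:])"

definition real_eigenvalue :: "real^'m^'m \<Rightarrow> real \<Rightarrow> bool" where
  "real_eigenvalue A \<mu> \<longleftrightarrow> (\<exists>v. v \<noteq> 0 \<and> A *v v = \<mu> *\<^sub>R v)"

end

theory Submission
  imports Defs
begin

lemma poly_det: "poly (det P) a = det (\<chi> i j. poly (P$i$j) a)"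
  unfolding det_def by (simp add: poly_sum poly_prod)

lemma sum_option: "(\<Sum>l\<in>(UNIV::'m::finite option set). f l) = f None + (\<Sum>k\<in>UNIV. f (Some k))"
proof -
  have "(\<Sum>l\<in>(UNIV::'m option set). f l) = (\<Sum>l\<in>insert None (range Some). f l)"
    by (simp add: UNIV_option_conv)
  also have "\<dots> = f None + (\<Sum>l\<in>range Some. f l)" by (subst sum.insert) auto
  also have "(\<Sum>l\<in>range Some. f l) = (\<Sum>k\<in>UNIV. f (Some k))"
    by (subst sum.reindex) (auto simp: inj_on_def)
  finally show ?thesis .
qed

lemma quad_sym:
  fixes N :: "real^'n^'n"
  assumes "\<And>i j. N$i$j = N$j$i"
  shows "x \<bullet> (N *v y) = y \<bullet> (N *v x)"
proof -
  have "x \<bullet> (N *v y) = (\<Sum>i\<in>UNIV. \<Sum>j\<in>UNIV. x$i * N$i$j * y$j)"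
    by (simp add: inner_vec_def matrix_vector_mult_def sum_distrib_left mult.assoc)
  also have "\<dots> = (\<Sum>j\<in>UNIV. \<Sum>i\<in>UNIV. x$i * N$i$j * y$j)" by (rule sum.swap)
  also have "\<dots> = y \<bullet> (N *v x)"
    by (simp add: inner_vec_def matrix_vector_mult_def sum_distrib_left assms mult_ac)
  finally show ?thesis .
qed

lemma psd_zero:
  fixes N :: "real^'n^'n"
  assumes sym: "\<And>i j. N$i$j = N$j$i" and psd: "\<And>y. 0 \<le> y \<bullet> (N *v y)"
    and z: "x \<bullet> (N *v x) = 0"
  shows "N *v x = 0"
proof (rule ccontr)
  assume ne: "N *v x \<noteq> 0"
  define h where "h = N *v x"
  define c where "c = h \<bullet> (N *v h)"
  have hh: "h \<bullet> h > 0" using ne h_def by simp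
  have c0: "c \<ge> 0" using psd c_def by simp
  define t where "t = (h \<bullet> h) / (c + 1)"
  have t0: "t > 0" using hh c0 t_def by simp
  have "(x - t *\<^sub>R h) \<bullet> (N *v (x - t *\<^sub>R h)) =
      x \<bullet> (N *v x) - t * (x \<bullet> (N *v h)) - t * (h \<bullet> (N *v x)) + t * t * c"
    by (simp add: matrix_vector_mult_diff_distrib inner_diff_left inner_diff_right c_def
         algebra_simps)
  also have "x \<bullet> (N *v h) = h \<bullet> (N *v x)" by (rule quad_sym[OF sym])
  finally have e: "(x - t *\<^sub>R h) \<bullet> (N *v (x - t *\<^sub>R h)) = t * (t * c - 2 * (h \<bullet> h))"
    using z h_def by (simp add: algebra_simps)
  have "t * c < 2 * (h \<bullet> h)"
  proof -
    have "t * c = (h \<bullet> h) * (c / (c + 1))" using t_def c0 by (simp add: field_simps)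
    also have "\<dots> \<le> (h \<bullet> h) * 1" using c0 hh by (intro mult_left_mono) (auto simp: field_simps)
    finally show ?thesis using hh by linarith
  qed
  then have "t * (t * c - 2 * (h \<bullet> h)) < 0" using t0 by (simp add: mult_pos_neg)
  with e psd[of "x - t *\<^sub>R h"] show False by linarith
qed


lemma conn_prop:
  fixes wE :: "'m::finite option \<Rightarrow> 'm option \<Rightarrow> real"
  assumes conn: "pos_connected (UNIV - {None}) wE"
    and step: "\<And>j k. 0 < wE (Some j) (Some k) \<Longrightarrow> P j \<Longrightarrow> P k"
    and base: "P j0"
  shows "P k"
proof -
  let ?R = "\<lambda>x y. x \<in> UNIV - {None} \<and> y \<in> UNIV - {None} \<and> wE x y > 0"
  have r: "?R\<^sup>*\<^sup>* (Some j0) (Some k)" using conn unfolding pos_connected_def by auto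
  have "\<And>y. ?R\<^sup>*\<^sup>* (Some j0) y \<Longrightarrow> y = Some k \<Longrightarrow> P k"
  proof -
    fix y assume "?R\<^sup>*\<^sup>* (Some j0) y"
    then have "\<forall>a. y = Some a \<longrightarrow> P a"
    proof (induction rule: rtranclp_induct)
      case base then show ?case using \<open>P j0\<close> by simp
    next
      case (step y z)
      then obtain a b where "y = Some a" "z = Some b" "wE (Some a) (Some b) > 0" by auto
      then show ?case using step assms(2) by auto
    qed
    then show "y = Some k \<Longrightarrow> P k" by simp
  qed
  with r show ?thesis by blast
qed

lemma conn_none:
  fixes wE :: "'m::finite option \<Rightarrow> 'm option \<Rightarrow> real"
  assumes conn: "pos_connected UNIV wE"
  shows "\<exists>j. wE (Some j) None > 0"
proof (rule ccontr)
  assume nz: "\<not> (\<exists>j. wE (Some j) None > 0)"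
  let ?R = "\<lambda>x y. x \<in> UNIV \<and> y \<in> UNIV \<and> wE x y > 0"
  obtain j0 :: 'm where True by simp
  have r: "?R\<^sup>*\<^sup>* (Some j0) None" using conn unfolding pos_connected_def by auto
  have "?R\<^sup>*\<^sup>* (Some j0) y \<Longrightarrow> y \<noteq> None" for y
  proof (induction rule: rtranclp_induct)
    case base then show ?case by simp
  next
    case (step y z)
    then obtain a where "y = Some a" by auto
    then show ?case using step nz by (cases z) auto
  qed
  then show False using r by blast
qed

lemma lap_entry: "lap_del wE $ j $ k = laplacian wE (Some j) (Some k)"
  by (simp add: lap_del_def)

lemma lap_sym: assumes "\<And>u v. wE u v = wE v u"
  shows "lap_del wE $ j $ k = lap_del wE $ k $ j"
  by (simp add: lap_del_def laplacian_def assms)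

lemma lap_quad1:
  fixes wE :: "'m::finite option \<Rightarrow> 'm option \<Rightarrow> real"
  shows "x \<bullet> (lap_del wE *v x) = (\<Sum>j\<in>UNIV. (\<Sum>l\<in>UNIV. wE (Some j) l) * (x$j)^2)
     - (\<Sum>j\<in>UNIV. \<Sum>k\<in>UNIV. wE (Some j) (Some k) * x$j * x$k)"
proof -
  have "x \<bullet> (lap_del wE *v x) = (\<Sum>j\<in>UNIV. \<Sum>k\<in>UNIV. x$j * ((if j = k then (\<Sum>l\<in>UNIV. wE (Some j) l) else 0) - wE (Some j) (Some k)) * x$k)"
    by (simp add: inner_vec_def matrix_vector_mult_def sum_distrib_left lap_del_def laplacian_def mult.assoc)
  also have "\<dots> = (\<Sum>j\<in>UNIV. \<Sum>k\<in>UNIV. (if j = k then (\<Sum>l\<in>UNIV. wE (Some j) l) * (x$j)^2 else 0) - wE (Some j) (Some k) * x$j * x$k)"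
    by (intro sum.cong refl) (auto simp: algebra_simps power2_eq_square)
  also have "\<dots> = (\<Sum>j\<in>UNIV. (\<Sum>l\<in>UNIV. wE (Some j) l) * (x$j)^2)
     - (\<Sum>j\<in>UNIV. \<Sum>k\<in>UNIV. wE (Some j) (Some k) * x$j * x$k)"
    by (simp add: sum_subtractf)
  finally show ?thesis .
qed


lemma lap_quad2:
  fixes wE :: "'m::finite option \<Rightarrow> 'm option \<Rightarrow> real"
  assumes sym: "\<And>u v. wE u v = wE v u"
  shows "x \<bullet> (lap_del wE *v x) = (\<Sum>j\<in>UNIV. wE (Some j) None * (x$j)^2)
     + (\<Sum>j\<in>UNIV. \<Sum>k\<in>UNIV. wE (Some j) (Some k) * (x$j - x$k)^2) / 2"
proof -
  have sw: "(\<Sum>j\<in>UNIV. \<Sum>k\<in>UNIV. wE (Some j) (Some k) * (x$k)^2) =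
        (\<Sum>j\<in>UNIV. \<Sum>k\<in>UNIV. wE (Some j) (Some k) * (x$j)^2)"
    by (subst sum.swap) (simp add: sym)
  have e1: "(\<Sum>j\<in>UNIV. \<Sum>k\<in>UNIV. wE (Some j) (Some k) * (x$j - x$k)^2) =
     (\<Sum>j\<in>UNIV. \<Sum>k\<in>UNIV. wE (Some j) (Some k) * (x$j)^2)
     + (\<Sum>j\<in>UNIV. \<Sum>k\<in>UNIV. wE (Some j) (Some k) * (x$k)^2)
     - 2 * (\<Sum>j\<in>UNIV. \<Sum>k\<in>UNIV. wE (Some j) (Some k) * x$j * x$k)"
    by (simp add: sum.distrib sum_subtractf sum_distrib_left power2_eq_square algebra_simps)
  have e2: "(\<Sum>j\<in>UNIV. (\<Sum>l\<in>UNIV. wE (Some j) l) * (x$j)^2) =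
      (\<Sum>j\<in>UNIV. wE (Some j) None * (x$j)^2) + (\<Sum>j\<in>UNIV. \<Sum>k\<in>UNIV. wE (Some j) (Some k) * (x$j)^2)"
    by (simp add: sum_option sum.distrib distrib_right sum_distrib_right)
  show ?thesis unfolding lap_quad1 e2 e1 sw by simp
qed

lemma lap_psd:
  fixes wE :: "'m::finite option \<Rightarrow> 'm option \<Rightarrow> real"
  assumes sym: "\<And>u v. wE u v = wE v u" and nn: "\<And>u v. wE u v \<ge> 0"
  shows "x \<bullet> (lap_del wE *v x) \<ge> 0"
  unfolding lap_quad2[OF sym]
  by (intro add_nonneg_nonneg divide_nonneg_nonneg sum_nonneg mult_nonneg_nonneg nn) auto

lemma lap_pd:
  fixes wE :: "'m::finite option \<Rightarrow> 'm option \<Rightarrow> real"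
  assumes sym: "\<And>u v. wE u v = wE v u" and nn: "\<And>u v. wE u v \<ge> 0"
    and conn_G: "pos_connected UNIV wE"
    and conn_Gi: "pos_connected (UNIV - {None}) wE"
    and z: "x \<bullet> (lap_del wE *v x) = 0"
  shows "x = 0"
proof -
  have t1: "(\<Sum>j\<in>UNIV. wE (Some j) None * (x$j)^2) = 0" and
       t2: "(\<Sum>j\<in>UNIV. \<Sum>k\<in>UNIV. wE (Some j) (Some k) * (x$j - x$k)^2) = 0"
  proof -
    have a: "(\<Sum>j\<in>UNIV. wE (Some j) None * (x$j)^2) \<ge> 0"
      by (intro sum_nonneg mult_nonneg_nonneg nn) auto
    have b: "(\<Sum>j\<in>UNIV. \<Sum>k\<in>UNIV. wE (Some j) (Some k) * (x$j - x$k)^2) \<ge> 0"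
      by (intro sum_nonneg mult_nonneg_nonneg nn) auto
    from z a b show "(\<Sum>j\<in>UNIV. wE (Some j) None * (x$j)^2) = 0"
        "(\<Sum>j\<in>UNIV. \<Sum>k\<in>UNIV. wE (Some j) (Some k) * (x$j - x$k)^2) = 0"
      unfolding lap_quad2[OF sym] by linarith+
  qed
  have n1: "wE (Some j) None * (x$j)^2 = 0" for j
    using t1 by (subst (asm) sum_nonneg_eq_0_iff) (auto intro: mult_nonneg_nonneg nn)
  have n2: "(\<Sum>k\<in>UNIV. wE (Some j) (Some k) * (x$j - x$k)^2) = 0" for j
    using t2 by (subst (asm) sum_nonneg_eq_0_iff) (auto intro!: sum_nonneg mult_nonneg_nonneg nn)
  have n3: "wE (Some j) (Some k) * (x$j - x$k)^2 = 0" for j k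
    using n2[of j] by (subst (asm) sum_nonneg_eq_0_iff) (auto intro: mult_nonneg_nonneg nn)
  obtain j0 where j0: "wE (Some j0) None > 0" using conn_none[OF conn_G] by blast
  have xj0: "x$j0 = 0" using n1[of j0] j0 by simp
  have n4: "x$k = 0" if "0 < wE (Some j) (Some k)" "x$j = 0" for j k
    using n3[of j k] that by simp
  have "x$k = 0" for k
    by (rule conn_prop[OF conn_Gi, of "\<lambda>j. x$j = 0" j0]) (use n4 xj0 in auto)
  then show ?thesis by (simp add: vec_eq_iff)
qed

definition vabs :: "real^'n \<Rightarrow> real^'n" where "vabs x = (\<chi> j. \<bar>x$j\<bar>)"

lemma lap_abs:
  fixes wE :: "'m::finite option \<Rightarrow> 'm option \<Rightarrow> real"
  assumes nn: "\<And>u v. wE u v \<ge> 0"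
  shows "vabs x \<bullet> (lap_del wE *v vabs x) \<le> x \<bullet> (lap_del wE *v x)"
  unfolding lap_quad1 vabs_def
proof -
  have "(\<Sum>j\<in>UNIV. \<Sum>k\<in>UNIV. wE (Some j) (Some k) * x$j * x$k) \<le>
        (\<Sum>j\<in>UNIV. \<Sum>k\<in>UNIV. wE (Some j) (Some k) * \<bar>x$j\<bar> * \<bar>x$k\<bar>)"
  proof (intro sum_mono)
    fix j k
    have "x$j * x$k \<le> \<bar>x$j\<bar> * \<bar>x$k\<bar>" by (metis abs_ge_self abs_mult)
    then show "wE (Some j) (Some k) * x$j * x$k \<le> wE (Some j) (Some k) * \<bar>x$j\<bar> * \<bar>x$k\<bar>"
      using mult_left_mono[OF _ nn] by (simp add: mult.assoc)
  qed
  then show "(\<Sum>j\<in>UNIV. (\<Sum>l\<in>UNIV. wE (Some j) l) * ((\<chi> j. \<bar>x $ j\<bar>) $ j)\<^sup>2) -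
    (\<Sum>j\<in>UNIV. \<Sum>k\<in>UNIV. wE (Some j) (Some k) * (\<chi> j. \<bar>x $ j\<bar>) $ j * (\<chi> j. \<bar>x $ j\<bar>) $ k)
    \<le> (\<Sum>j\<in>UNIV. (\<Sum>l\<in>UNIV. wE (Some j) l) * (x $ j)\<^sup>2) -
       (\<Sum>j\<in>UNIV. \<Sum>k\<in>UNIV. wE (Some j) (Some k) * x $ j * x $ k)" by simp
qed

lemma wv_mult: "wv_del wV *v x = (\<chi> j. wV (Some j) * x$j)"
proof -
  have "(\<Sum>j\<in>UNIV. (if i = j then wV (Some i) else 0) * x$j) = wV (Some i) * x$i" for i
    by (simp add: if_distrib[of "\<lambda>c. c * _"] cong: if_cong)
  then show ?thesis by (simp add: wv_del_def matrix_vector_mult_def vec_eq_iff)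
qed

lemma wv_quad: "x \<bullet> (wv_del wV *v x) = (\<Sum>j\<in>UNIV. wV (Some j) * (x$j)^2)"
  by (simp add: wv_mult inner_vec_def power2_eq_square mult_ac)

lemma wv_abs: "vabs x \<bullet> (wv_del wV *v vabs x) = x \<bullet> (wv_del wV *v x)"
  by (simp add: wv_quad vabs_def)


lemma mv_scale: "(A::real^'n^'m) *v (c *\<^sub>R y) = c *\<^sub>R (A *v y)"
  by (simp add: vec_eq_iff matrix_vector_mult_def sum_distrib_left mult_ac)

lemma quad_scale: "(c *\<^sub>R y) \<bullet> ((A::real^'n^'n) *v (c *\<^sub>R y)) = c * c * (y \<bullet> (A *v y))"
proof -
  have "A *v (c *\<^sub>R y) = c *\<^sub>R (A *v y)"
    by (simp add: vec_eq_iff matrix_vector_mult_def sum_distrib_left mult_ac)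
  then show ?thesis by simp
qed

lemma rayleigh_max:
  fixes wE :: "'m::finite option \<Rightarrow> 'm option \<Rightarrow> real"
    and wV :: "'m option \<Rightarrow> real"
  assumes sym: "\<And>u v. wE u v = wE v u"
    and nonneg_E: "\<And>u v. wE u v \<ge> 0"
    and nonneg_V: "\<And>v. wV v \<ge> 0"
    and nonzero_V: "\<exists>v. v \<noteq> None \<and> wV v \<noteq> 0"
    and conn_G: "pos_connected UNIV wE"
    and conn_Gi: "pos_connected (UNIV - {None}) wE"
  shows "\<exists>\<mu> g. \<mu> > 0 \<and> g \<noteq> 0 \<and> (\<forall>y. y \<bullet> (wv_del wV *v y) \<le> \<mu> * (y \<bullet> (lap_del wE *v y)))
      \<and> g \<bullet> (wv_del wV *v g) = \<mu> * (g \<bullet> (lap_del wE *v g))"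
proof -
  let ?L = "lap_del wE" and ?W = "wv_del wV"
  have Lpos: "y \<bullet> (?L *v y) > 0" if "y \<noteq> 0" for y
    using lap_psd[where wE=wE, OF sym nonneg_E, of y] lap_pd[OF sym nonneg_E conn_G conn_Gi, of y] that
    by linarith
  define f where "f y = (y \<bullet> (?W *v y)) / (y \<bullet> (?L *v y))" for y
  have cont: "continuous_on (sphere 0 1) f"
    unfolding f_def
  proof (intro continuous_intros linear_continuous_on matrix_vector_mul_bounded_linear)
    show "\<forall>y\<in>sphere 0 1. y \<bullet> (?L *v y) \<noteq> 0"
      using Lpos by (metis less_irrefl norm_zero mem_sphere_0 zero_neq_one)
  qed
  obtain j0 :: 'm where True by simp
  have ne: "sphere (0::real^'m) 1 \<noteq> {}"
    using norm_axis_1[of j0] by (auto simp: sphere_def intro!: exI[of _ "axis j0 1"])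
  obtain g where g: "g \<in> sphere 0 1" and gmax: "\<And>y. y \<in> sphere 0 1 \<Longrightarrow> f y \<le> f g"
    using continuous_attains_sup[OF compact_sphere ne cont] by blast
  define \<mu> where "\<mu> = f g"
  have g0: "g \<noteq> 0" using g by auto
  have bound: "y \<bullet> (?W *v y) \<le> \<mu> * (y \<bullet> (?L *v y))" for y
  proof (cases "y = 0")
    case True then show ?thesis by simp
  next
    case False
    define c where "c = 1 / norm y"
    have c0: "c \<noteq> 0" using False c_def by simp
    have "c *\<^sub>R y \<in> sphere 0 1" using False c_def by simp
    then have "f (c *\<^sub>R y) \<le> \<mu>" using gmax \<mu>_def by simp
    moreover have "f (c *\<^sub>R y) = f y" unfolding f_def quad_scale using c0 by simp
    ultimately have "f y \<le> \<mu>" by simp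
    then show ?thesis using Lpos[OF False] unfolding f_def by (simp add: divide_le_eq)
  qed
  have geq: "g \<bullet> (?W *v g) = \<mu> * (g \<bullet> (?L *v g))"
    using Lpos[OF g0] unfolding \<mu>_def f_def by simp
  obtain j where j: "wV (Some j) \<noteq> 0" using nonzero_V by auto
  have wj: "wV (Some j) > 0" using j nonneg_V[of "Some j"] by simp
  define e where "e = (axis j 1 :: real^'m)"
  have "e \<bullet> (?W *v e) = wV (Some j)"
    unfolding wv_quad e_def axis_def
    by (simp add: if_distrib[of "\<lambda>c. c^2"] if_distrib[of "\<lambda>c. _ * c"] cong: if_cong)
  moreover have "e \<noteq> 0" unfolding e_def by (simp add: axis_eq_0_iff)
  ultimately have "\<mu> > 0" using bound[of e] Lpos[of e] wj
    by (metis mult_nonpos_nonneg not_le order_less_le order_trans less_eq_real_def)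
  then show ?thesis using g0 bound geq by blast
qed


lemma lap_row: "(lap_del wE *v y)$j = (\<Sum>l\<in>UNIV. wE (Some j) l) * y$j - (\<Sum>k\<in>UNIV. wE (Some j) (Some k) * y$k)"
proof -
  have "(lap_del wE *v y)$j = (\<Sum>k\<in>UNIV. (if j = k then (\<Sum>l\<in>UNIV. wE (Some j) l) * y$k else 0) - wE (Some j) (Some k) * y$k)"
    by (simp add: matrix_vector_mult_def lap_del_def laplacian_def algebra_simps, intro sum.cong) auto
  then show ?thesis by (simp add: sum_subtractf)
qed

definition Nmat :: "real \<Rightarrow> real^'m^'m \<Rightarrow> real^'m^'m \<Rightarrow> real^'m^'m" where
  "Nmat \<mu> L W = (\<chi> i j. \<mu> * L$i$j - W$i$j)"

lemma Nmat_mult: "Nmat \<mu> L W *v x = \<mu> *\<^sub>R (L *v x) - W *v x"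
  by (simp add: Nmat_def vec_eq_iff matrix_vector_mult_def sum_subtractf sum_distrib_left algebra_simps)

lemma Nmat_quad: "x \<bullet> (Nmat \<mu> L W *v x) = \<mu> * (x \<bullet> (L *v x)) - x \<bullet> (W *v x)"
  by (simp add: Nmat_mult inner_diff_right)

lemma perron:
  fixes wE :: "'m::finite option \<Rightarrow> 'm option \<Rightarrow> real"
    and wV :: "'m option \<Rightarrow> real"
  assumes nonneg_E: "\<And>u v. wE u v \<ge> 0"
    and conn_Gi: "pos_connected (UNIV - {None}) wE"
    and mu: "\<mu> > 0"
    and ker: "Nmat \<mu> (lap_del wE) (wv_del wV) *v y = 0"
    and nn: "\<And>j. y$j \<ge> 0" and nz: "y \<noteq> 0"
  shows "y$k > 0"
proof -
  have row: "\<mu> * ((\<Sum>l\<in>UNIV. wE (Some j) l) * y$j - (\<Sum>k\<in>UNIV. wE (Some j) (Some k) * y$k)) = wV (Some j) * y$j" for j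
  proof -
    have "(Nmat \<mu> (lap_del wE) (wv_del wV) *v y)$j = 0" using ker by simp
    then show ?thesis by (simp add: Nmat_mult wv_mult lap_row)
  qed
  have prp: "y$k = 0" if "0 < wE (Some j) (Some k)" "y$j = 0" for j k
  proof -
    have "\<mu> * (- (\<Sum>k\<in>UNIV. wE (Some j) (Some k) * y$k)) = 0" using row[of j] that(2) by simp
    then have s: "(\<Sum>k\<in>UNIV. wE (Some j) (Some k) * y$k) = 0" using mu by simp
    have "wE (Some j) (Some k) * y$k = 0"
      using s by (subst (asm) sum_nonneg_eq_0_iff) (auto intro: mult_nonneg_nonneg nonneg_E nn)
    then show ?thesis using that(1) by simp
  qed
  show ?thesis
  proof (rule ccontr)
    assume "\<not> y$k > 0"
    then have yk: "y$k = 0" using nn[of k] by simp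
    have "y$j = 0" for j
      by (rule conn_prop[OF conn_Gi, of "\<lambda>j. y$j = 0" k]) (use prp yk in auto)
    then have "y = 0" by (simp add: vec_eq_iff)
    then show False using nz by simp
  qed
qed

lemma kernel_structure:
  fixes wE :: "'m::finite option \<Rightarrow> 'm option \<Rightarrow> real"
    and wV :: "'m option \<Rightarrow> real"
  assumes sym: "\<And>u v. wE u v = wE v u"
    and nonneg_E: "\<And>u v. wE u v \<ge> 0"
    and conn_Gi: "pos_connected (UNIV - {None}) wE"
    and mu: "\<mu> > 0"
    and bound: "\<And>y. y \<bullet> (wv_del wV *v y) \<le> \<mu> * (y \<bullet> (lap_del wE *v y))"
    and g0: "g \<noteq> 0" and geq: "g \<bullet> (wv_del wV *v g) = \<mu> * (g \<bullet> (lap_del wE *v g))"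
  shows "\<exists>v. Nmat \<mu> (lap_del wE) (wv_del wV) *v v = 0 \<and> (\<forall>j. v$j > 0) \<and>
     (\<forall>x. Nmat \<mu> (lap_del wE) (wv_del wV) *v x = 0 \<longrightarrow> (\<exists>c. x = c *\<^sub>R v))"
proof -
  let ?N = "Nmat \<mu> (lap_del wE) (wv_del wV)"
  have Nsym: "\<And>i j. ?N$i$j = ?N$j$i"
    by (simp add: Nmat_def wv_del_def lap_sym[OF sym])
  have psd: "\<And>y. 0 \<le> y \<bullet> (?N *v y)" using bound by (simp add: Nmat_quad)
  have kabs: "?N *v vabs x = 0" if "?N *v x = 0" for x
  proof -
    have "x \<bullet> (?N *v x) = 0" using that by simp
    then have "vabs x \<bullet> (?N *v vabs x) \<le> 0"
      unfolding Nmat_quad wv_abs using lap_abs[where wE=wE, OF nonneg_E, of x] mu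
      by (smt (verit) mult_left_mono)
    then have "vabs x \<bullet> (?N *v vabs x) = 0" using psd[of "vabs x"] by simp
    then show ?thesis by (rule psd_zero[OF Nsym psd])
  qed
  have pos: "\<forall>j. (vabs x)$j > 0" if "?N *v x = 0" "x \<noteq> 0" for x
  proof
    fix j
    have "vabs x \<noteq> 0" using that(2) by (simp add: vabs_def vec_eq_iff)
    moreover have "\<And>j. (vabs x)$j \<ge> 0" by (simp add: vabs_def)
    ultimately show "(vabs x)$j > 0"
      using perron[where wE=wE and wV=wV, OF nonneg_E conn_Gi mu kabs[OF that(1)]] by blast
  qed
  have Ng: "?N *v g = 0" using geq by (intro psd_zero[OF Nsym psd]) (simp add: Nmat_quad)
  define v where "v = vabs g"
  have Nv: "?N *v v = 0" using kabs[OF Ng] v_def by simp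
  have vpos: "\<forall>j. v$j > 0" using pos[OF Ng g0] v_def by simp
  obtain k :: 'm where True by simp
  have "\<exists>c. x = c *\<^sub>R v" if "?N *v x = 0" for x
  proof -
    define z where "z = x - (x$k / v$k) *\<^sub>R v"
    have Nz: "?N *v z = 0" using that Nv
      by (simp add: z_def matrix_vector_mult_diff_distrib mv_scale)
    have zk: "z$k = 0" using vpos[rule_format, of k] by (simp add: z_def)
    have "z = 0"
    proof (rule ccontr)
      assume "z \<noteq> 0"
      then have "(vabs z)$k > 0" using pos[OF Nz] by blast
      then show False using zk by (simp add: vabs_def)
    qed
    then show ?thesis unfolding z_def by (metis eq_iff_diff_eq_0)
  qed
  then show ?thesis using Nv vpos by blast
qed


lemma det_nz_ker:
  fixes A :: "real^'n^'n"
  assumes "\<And>x. A *v x = 0 \<Longrightarrow> x = 0"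
  shows "det A \<noteq> 0"
  using assms by (simp add: invertible_det_nz[symmetric] invertible_left_inverse matrix_left_invertible_ker)

lemma matrix_inv_prop:
  assumes "invertible (A::real^'n^'n)"
  shows "A ** matrix_inv A = mat 1 \<and> matrix_inv A ** A = mat 1"
  using assms unfolding matrix_inv_def invertible_def
  by (rule someI_ex)

lemma conj_entry:
  "(transpose S ** X ** S)$i$j = (\<Sum>k\<in>UNIV. \<Sum>l\<in>UNIV. S$k$i * X$k$l * S$l$j)"
  by (simp add: matrix_matrix_mult_def transpose_def sum_distrib_left sum_distrib_right mult_ac)
     (rule sum.swap)

lemma quad_conj:
  fixes S X :: "real^'n^'n"
  shows "x \<bullet> ((transpose S ** X ** S) *v x) = (S *v x) \<bullet> (X *v (S *v x))"
proof -
  have "x \<bullet> ((transpose S ** X ** S) *v x) = x \<bullet> (transpose S *v (X *v (S *v x)))"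
    by (simp add: matrix_vector_mul_assoc matrix_mul_assoc)
  also have "\<dots> = (x v* transpose S) \<bullet> (X *v (S *v x))" by (simp only: dot_lmul_matrix)
  also have "\<dots> = (S *v x) \<bullet> (X *v (S *v x))" by (simp only: vector_transpose_matrix)
  finally show ?thesis .
qed


lemma simple_root:
  fixes L W :: "real^'m^'m" and v :: "real^'m"
  assumes invL: "invertible L"
    and Nsym: "\<And>i j. Nmat \<mu> L W $i$j = Nmat \<mu> L W $j$i"
    and psd: "\<And>y. 0 \<le> y \<bullet> (Nmat \<mu> L W *v y)"
    and Nv: "Nmat \<mu> L W *v v = 0"
    and ker: "\<And>x. Nmat \<mu> L W *v x = 0 \<Longrightarrow> \<exists>c. x = c *\<^sub>R v"
    and vk: "v$k0 \<noteq> 0"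
    and vLv: "v \<bullet> (L *v v) \<noteq> 0"
  shows "order \<mu> (charpoly (matrix_inv L ** W)) = 1"
proof -
  let ?N = "Nmat \<mu> L W"
  have LLi: "L ** matrix_inv L = mat 1" using matrix_inv_prop[OF invL] by simp
  define M where "M = matrix_inv L ** W"
  have LM: "L ** M = W" by (simp add: M_def matrix_mul_assoc LLi)
  define A where "A a = (\<chi> j k. (if j = k then a else 0) - M$j$k)" for a
  have polyA: "poly (charpoly M) a = det (A a)" for a
    unfolding charpoly_def poly_det A_def
    by (intro arg_cong[where f=det]) (simp add: vec_eq_iff)
  have LA: "L ** A a = (\<chi> j k. (a - \<mu>) * L$j$k + ?N$j$k)" for a
  proof -
    have "(L ** A a)$j$k = (a - \<mu>) * L$j$k + ?N$j$k" for j k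
    proof -
      have "(L ** A a)$j$k = (\<Sum>l\<in>UNIV. (if l = k then L$j$l * a else 0)) - (\<Sum>l\<in>UNIV. L$j$l * M$l$k)"
        by (simp add: matrix_matrix_mult_def A_def right_diff_distrib sum_subtractf if_distrib[of "\<lambda>c. _ * c"] cong: if_cong)
      also have "(\<Sum>l\<in>UNIV. L$j$l * M$l$k) = W$j$k"
        using LM by (simp add: matrix_matrix_mult_def vec_eq_iff)
      finally show ?thesis by (simp add: Nmat_def algebra_simps)
    qed
    then show ?thesis by (simp add: vec_eq_iff)
  qed
  define S where "S = (\<chi> i j. if j = k0 then v$i else (if i = j then 1 else (0::real)))"
  have Sx: "(S *v x)$i = v$i * x$k0 + (if i = k0 then 0 else x$i)" for x i
  proof -
    have "(S *v x)$i = (\<Sum>j\<in>UNIV. (if j = k0 then v$i * x$k0 else 0) + (if j = i then (if i = k0 then 0 else x$i) else 0))"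
      unfolding matrix_vector_mult_def S_def vec_lambda_beta by (intro sum.cong) auto
    then show ?thesis by (simp add: sum.distrib)
  qed
  have detS: "det S \<noteq> 0"
  proof (rule det_nz_ker)
    fix x assume "S *v x = 0"
    then have e: "(S *v x)$i = 0" for i by simp
    have xk: "x$k0 = 0" using e[of k0] vk by (simp add: Sx)
    have "x$i = 0" for i using e[of i] xk by (simp add: Sx split: if_splits)
    then show "x = 0" by (simp add: vec_eq_iff)
  qed
  have detL: "det L \<noteq> 0" using invL by (simp add: invertible_det_nz)
  define L' where "L' = transpose S ** L ** S"
  define N' where "N' = transpose S ** ?N ** S"
  define B where "B a = transpose S ** (\<chi> j k. (a - \<mu>) * L$j$k + ?N$j$k) ** S" for a
  have Bent: "B a $i$j = (a - \<mu>) * L'$i$j + N'$i$j" for a i j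
  proof -
    have "B a $i$j = (\<Sum>k\<in>UNIV. \<Sum>l\<in>UNIV. (a - \<mu>) * (S$k$i * L$k$l * S$l$j) + S$k$i * ?N$k$l * S$l$j)"
      unfolding B_def conj_entry by (intro sum.cong refl) (simp add: algebra_simps)
    also have "\<dots> = (a - \<mu>) * (\<Sum>k\<in>UNIV. \<Sum>l\<in>UNIV. S$k$i * L$k$l * S$l$j) + (\<Sum>k\<in>UNIV. \<Sum>l\<in>UNIV. S$k$i * ?N$k$l * S$l$j)"
      by (simp add: sum.distrib sum_distrib_left)
    finally show ?thesis by (simp add: L'_def N'_def conj_entry)
  qed
  have colv: "S$k$k0 = v$k" for k by (simp add: S_def)
  have N'row: "N'$k0$j = 0" for j
  proof -
    have z: "(\<Sum>k\<in>UNIV. v$k * ?N$k$l) = 0" for l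
    proof -
      have "(?N *v v)$l = 0" using Nv by simp
      then show ?thesis by (simp add: matrix_vector_mult_def Nsym[of _ l] mult.commute)
    qed
    have "N'$k0$j = (\<Sum>k\<in>UNIV. \<Sum>l\<in>UNIV. v$k * ?N$k$l * S$l$j)"
      by (simp add: N'_def conj_entry colv)
    also have "\<dots> = (\<Sum>l\<in>UNIV. (\<Sum>k\<in>UNIV. v$k * ?N$k$l) * S$l$j)"
      by (subst sum.swap) (simp add: sum_distrib_right)
    also have "\<dots> = 0" by (simp add: z)
    finally show ?thesis .
  qed
  have L'kk: "L'$k0$k0 = v \<bullet> (L *v v)"
    by (simp add: L'_def conj_entry colv inner_vec_def matrix_vector_mult_def sum_distrib_left mult_ac)
  define Cp where "Cp = (\<chi> i j. if i = k0 then [:L'$k0$j:] else [:N'$i$j - \<mu> * L'$i$j, L'$i$j:])"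
  define C where "C a = (\<chi> i j. poly (Cp$i$j) a)" for a
  have Cent: "C a $ i $ j = (if i = k0 then L'$k0$j else N'$i$j - \<mu> * L'$i$j + a * L'$i$j)" for a i j
    by (simp add: C_def Cp_def)
  have Brow: "B a = (\<chi> i. if i = k0 then (a - \<mu>) *s (C a)$i else (C a)$i)" for a
    by (simp add: vec_eq_iff Bent Cent N'row algebra_simps)
  have detB: "det (B a) = (a - \<mu>) * det (C a)" for a
    using det_row_mul[of k0 "a - \<mu>" "\<lambda>i. C a $ i" "\<lambda>i. C a $ i"] by (simp add: Brow)
  have detB2: "det (B a) = det S * (det L * det (A a)) * det S" for a
    by (simp add: B_def LA[symmetric] det_mul det_transpose)
  define \<kappa> where "\<kappa> = 1 / (det S * det L * det S)"
  have k0: "\<kappa> \<noteq> 0" using detS detL by (simp add: \<kappa>_def)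
  define q where "q = smult \<kappa> (det Cp)"
  have cp: "charpoly M = [:-\<mu>, 1:] * q"
  proof -
    have "poly (charpoly M) a = poly ([:-\<mu>, 1:] * q) a" for a
    proof -
      have "det (A a) = (a - \<mu>) * \<kappa> * det (C a)"
        using detB[of a] detB2[of a] detS detL by (simp add: \<kappa>_def field_simps)
      then show ?thesis by (simp add: polyA q_def poly_det C_def) (simp add: left_diff_distrib)
    qed
    then show ?thesis using poly_eq_poly_eq_iff by blast
  qed
  have C0: "det (C \<mu>) \<noteq> 0"
  proof (rule det_nz_ker)
    fix x assume Cx: "C \<mu> *v x = 0"
    have Cm: "C \<mu> $i$j = (if i = k0 then L'$k0$j else N'$i$j)" for i j by (simp add: Cent)
    have N'x: "N' *v x = 0"
    proof -
      have "(N' *v x)$i = 0" for i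
      proof (cases "i = k0")
        case True then show ?thesis by (simp add: matrix_vector_mult_def N'row)
      next
        case False
        have "(C \<mu> *v x)$i = 0" using Cx by simp
        then show ?thesis using False by (simp add: matrix_vector_mult_def Cm)
      qed
      then show ?thesis by (simp add: vec_eq_iff)
    qed
    have "(S *v x) \<bullet> (?N *v (S *v x)) = 0" using quad_conj[of x S ?N] N'x by (simp add: N'_def)
    then have "?N *v (S *v x) = 0" by (rule psd_zero[OF Nsym psd])
    then obtain c where c: "S *v x = c *\<^sub>R v" using ker by blast
    have ce: "v$i * x$k0 + (if i = k0 then 0 else x$i) = c * v$i" for i
      using arg_cong[OF c, of "\<lambda>y. y$i"] by (simp add: Sx)
    have xk: "x$k0 = c" using ce[of k0] vk by simp
    have xi: "x$i = 0" if "i \<noteq> k0" for i using ce[of i] xk that by simp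
    have xrep: "x$j = (if j = k0 then x$k0 else 0)" for j using xi by auto
    have "(C \<mu> *v x)$k0 = (\<Sum>j\<in>UNIV. L'$k0$j * x$j)" by (simp add: matrix_vector_mult_def Cm)
    also have "\<dots> = (\<Sum>j\<in>UNIV. if j = k0 then L'$k0$k0 * x$k0 else 0)"
      by (intro sum.cong refl) (subst xrep, auto)
    also have "\<dots> = L'$k0$k0 * x$k0" by simp
    finally have "L'$k0$k0 * x$k0 = 0" using Cx by simp
    then have "x$k0 = 0" using L'kk vLv by simp
    then show "x = 0" using xi unfolding vec_eq_iff by (metis zero_index)
  qed
  have pq: "poly q \<mu> \<noteq> 0" using C0 k0 by (simp add: q_def poly_det C_def)
  then have q0: "q \<noteq> 0" by auto
  have oq: "order \<mu> q = 0" using pq order_root by blast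
  have "order \<mu> ([:-\<mu>, 1:] * q) = order \<mu> [:-\<mu>, 1:] + order \<mu> q"
  proof (rule order_mult)
    have "[:-\<mu>, 1:] \<noteq> (0::real poly)" by simp
    then show "[:-\<mu>, 1:] * q \<noteq> 0" using q0 by (metis mult_eq_0_iff)
  qed
  also have "order \<mu> [:-\<mu>, 1:] = 1" using order_power_n_n[of \<mu> 1] by simp
  finally show ?thesis using oq cp M_def by simp
qed


theorem theorem12:
  fixes wE :: "'m::finite option \<Rightarrow> 'm option \<Rightarrow> real"
    and wV :: "'m option \<Rightarrow> real"
  assumes sym: "\<And>u v. wE u v = wE v u"
    and nonneg_E: "\<And>u v. wE u v \<ge> 0"
    and nonneg_V: "\<And>v. wV v \<ge> 0"
    and nonzero_V: "\<exists>v. v \<noteq> None \<and> wV v \<noteq> 0"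
    and conn_G: "pos_connected UNIV wE"
    and conn_Gi: "pos_connected (UNIV - {None}) wE"
  shows "\<exists>\<mu>. real_eigenvalue (matrix_inv (lap_del wE) ** wv_del wV) \<mu>
            \<and> (\<forall>lam. real_eigenvalue (matrix_inv (lap_del wE) ** wv_del wV) lam \<longrightarrow> lam \<le> \<mu>)
            \<and> order \<mu> (charpoly (matrix_inv (lap_del wE) ** wv_del wV)) = 1"
proof -
  let ?L = "lap_del wE" and ?W = "wv_del wV"
  obtain \<mu> g where mu: "\<mu> > 0" and g0: "g \<noteq> 0"
    and bound: "\<And>y. y \<bullet> (?W *v y) \<le> \<mu> * (y \<bullet> (?L *v y))"
    and geq: "g \<bullet> (?W *v g) = \<mu> * (g \<bullet> (?L *v g))"
    using rayleigh_max[OF sym nonneg_E nonneg_V nonzero_V conn_G conn_Gi] by blast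
  let ?N = "Nmat \<mu> ?L ?W"
  obtain v where Nv: "?N *v v = 0" and vpos: "\<forall>j. v$j > 0"
    and ker: "\<And>x. ?N *v x = 0 \<Longrightarrow> \<exists>c. x = c *\<^sub>R v"
    using kernel_structure[where wE=wE and wV=wV, OF sym nonneg_E conn_Gi mu bound g0 geq] by blast
  have Lpos: "y \<bullet> (?L *v y) > 0" if "y \<noteq> 0" for y
    using lap_psd[where wE=wE, OF sym nonneg_E, of y] lap_pd[OF sym nonneg_E conn_G conn_Gi, of y] that
    by linarith
  have invL: "invertible ?L"
    unfolding invertible_left_inverse matrix_left_invertible_ker
  proof (intro allI impI)
    fix x assume "?L *v x = 0"
    then have "x \<bullet> (?L *v x) = 0" by simp
    then show "x = 0" using Lpos by (metis less_irrefl)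
  qed
  have LLi: "?L ** matrix_inv ?L = mat 1" and LiL: "matrix_inv ?L ** ?L = mat 1"
    using matrix_inv_prop[OF invL] by auto
  define M where "M = matrix_inv ?L ** ?W"
  have LM: "?L ** M = ?W" by (simp add: M_def matrix_mul_assoc LLi)
  obtain k0 :: 'm where True by simp
  have v0: "v \<noteq> 0" using vpos[rule_format, of k0] by auto
  have Wv: "?W *v v = \<mu> *\<^sub>R (?L *v v)" using Nv by (simp add: Nmat_mult)
  have Mv: "M *v v = \<mu> *\<^sub>R v"
  proof -
    have "M *v v = matrix_inv ?L *v (?W *v v)" by (simp add: M_def matrix_vector_mul_assoc)
    also have "\<dots> = \<mu> *\<^sub>R ((matrix_inv ?L ** ?L) *v v)" by (simp add: Wv mv_scale matrix_vector_mul_assoc)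
    finally show ?thesis by (simp add: LiL)
  qed
  have eig: "real_eigenvalue M \<mu>" unfolding real_eigenvalue_def using v0 Mv by blast
  have upper: "lam \<le> \<mu>" if ev: "real_eigenvalue M lam" for lam
  proof -
    have "\<exists>x. x \<noteq> 0 \<and> M *v x = lam *\<^sub>R x" using ev by (simp only: real_eigenvalue_def)
    then obtain x where x0: "x \<noteq> 0" and Mx: "M *v x = lam *\<^sub>R x" by blast
    have "?W *v x = ?L *v (M *v x)" by (simp add: matrix_vector_mul_assoc LM)
    also have "\<dots> = lam *\<^sub>R (?L *v x)" by (simp only: Mx mv_scale)
    finally have "x \<bullet> (?W *v x) = lam * (x \<bullet> (?L *v x))" by simp
    with bound[of x] have "lam * (x \<bullet> (?L *v x)) \<le> \<mu> * (x \<bullet> (?L *v x))" by simp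
    then show ?thesis using Lpos[OF x0] by simp
  qed
  have Nsym: "\<And>i j. ?N$i$j = ?N$j$i"
    by (simp add: Nmat_def wv_del_def lap_sym[OF sym])
  have psd: "\<And>y. 0 \<le> y \<bullet> (?N *v y)" using bound by (simp add: Nmat_quad)
  have ord: "order \<mu> (charpoly M) = 1"
    unfolding M_def
    by (rule simple_root[OF invL Nsym psd Nv ker, of k0])
       (use vpos[rule_format, of k0] Lpos[OF v0] in auto)
  show ?thesis using eig upper ord unfolding M_def by blast
qed

end
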